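(* Let $\mathcal S=(S_1,\dots,S_s)\in B(H)^s$ be an $s$-tuple of selfadjoint operators, let $(\lambda_k)_{k=1}^\infty\subset\operatorname{Int}_{\mathbb R^s}W_{\rm e}(\mathcal S)$ with $(\lambda_k)_{k=1}^\infty\in\mathcal D(\mathcal S)$, and write $\lambda_k=(\lambda_{k,1},\dots,\lambda_{k,s})$. Let $\alpha_0,\dots,\alpha_s\in\mathbb R$ with $(\alpha_1,\dots,\alpha_s)\ne(0,\dots,0)$, let $V=\alpha_0I+\sum_{j=1}^s\alpha_jS_j$ and $a=\inf\{t:t\in W(V)\}$. Then $$\sum_{k=1}^\infty\Bigl(\alpha_0-a+\sum_{j=1}^s\alpha_j\lambda_{k,j}\Bigr)=\infty.$$
   Context: $H$ is an infinite-dimensional complex separable Hilbert space. $W(V)=\{\langle Vx,x\rangle:\|x\|=1\}$. $W_{\rm e}(\mathcal S)\subset\mathbb R^s$ is the set of $\lambda$ with $\langle S_jx_k,x_k\rangle\to\lambda_j$ for all $j$ for some orthonormal sequence $(x_k)$. $\mathcal D(\mathcal S)$ is the set of sequences $(\langle S_1u_k,u_k\rangle,\dots,\langle S_su_k,u_k\rangle)_{k\ge1}$ over orthonormal bases $(u_k)$ of $H$. $\operatorname{Int}_{\mathbb R^s}$ is interior in $\mathbb R^s$. *)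

theory Defs
  imports "HOL-Analysis.Analysis"
begin

text \<open>Model of H: the infinite-dimensional complex separable Hilbert space
  realised concretely as l2(N) (unique up to unitary equivalence).\<close>

type_synonym vec = "nat \<Rightarrow> complex"
type_synonym op = "vec \<Rightarrow> vec"

definition l2 :: "vec set" where
  "l2 = {x. summable (\<lambda>n. (cmod (x n))\<^sup>2)}"

definition l2_inner :: "vec \<Rightarrow> vec \<Rightarrow> complex" where
  "l2_inner x y = (\<Sum>n. x n * cnj (y n))"

definition l2_norm :: "vec \<Rightarrow> real" where
  "l2_norm x = sqrt (\<Sum>n. (cmod (x n))\<^sup>2)"

definition vadd :: "vec \<Rightarrow> vec \<Rightarrow> vec" where
  "vadd x y = (\<lambda>n. x n + y n)"

definition vscale :: "complex \<Rightarrow> vec \<Rightarrow> vec" where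
  "vscale c x = (\<lambda>n. c * x n)"

definition bounded_op :: "op \<Rightarrow> bool" where
  "bounded_op T \<longleftrightarrow>
     (\<forall>x\<in>l2. T x \<in> l2) \<and>
     (\<forall>x\<in>l2. \<forall>y\<in>l2. T (vadd x y) = vadd (T x) (T y)) \<and>
     (\<forall>x\<in>l2. \<forall>c. T (vscale c x) = vscale c (T x)) \<and>
     (\<exists>C. \<forall>x\<in>l2. l2_norm (T x) \<le> C * l2_norm x)"

definition selfadjoint :: "op \<Rightarrow> bool" where
  "selfadjoint T \<longleftrightarrow> bounded_op T \<and>
     (\<forall>x\<in>l2. \<forall>y\<in>l2. l2_inner (T x) y = l2_inner x (T y))"

definition orthonormal_seq :: "(nat \<Rightarrow> vec) \<Rightarrow> bool" where
  "orthonormal_seq u \<longleftrightarrow> (\<forall>k. u k \<in> l2) \<and>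
     (\<forall>i j. l2_inner (u i) (u j) = (if i = j then 1 else 0))"

definition orthonormal_basis :: "(nat \<Rightarrow> vec) \<Rightarrow> bool" where
  "orthonormal_basis u \<longleftrightarrow> orthonormal_seq u \<and>
     (\<forall>x\<in>l2. (\<forall>k. l2_inner x (u k) = 0) \<longrightarrow> x = (\<lambda>n. 0))"

definition numerical_range :: "op \<Rightarrow> complex set" where
  "numerical_range V = {l2_inner (V x) x | x. x \<in> l2 \<and> l2_norm x = 1}"

definition ess_num_range :: "('s::finite \<Rightarrow> op) \<Rightarrow> (real^'s) set" where
  "ess_num_range S = {lam. \<exists>x. orthonormal_seq x \<and>
     (\<forall>j. (\<lambda>k. Re (l2_inner (S j (x k)) (x k))) \<longlonglongrightarrow> lam $ j)}"

definition diagonals :: "('s::finite \<Rightarrow> op) \<Rightarrow> (nat \<Rightarrow> real^'s) set" where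
  "diagonals S = {d. \<exists>u. orthonormal_basis u \<and>
     (\<forall>k. d k = (\<chi> j. Re (l2_inner (S j (u k)) (u k))))}"

end

theory Submission
  imports Defs
begin


lemma l2_iff: "x \<in> l2 \<longleftrightarrow> summable (\<lambda>n. (cmod (x n))\<^sup>2)"
  by (simp add: l2_def)

lemma sq_add_le: "(cmod (a + b))\<^sup>2 \<le> 2 * (cmod a)\<^sup>2 + 2 * (cmod b)\<^sup>2"
proof -
  have "cmod (a+b) \<le> cmod a + cmod b" by (rule norm_triangle_ineq)
  hence "(cmod (a + b))\<^sup>2 \<le> (cmod a + cmod b)\<^sup>2" by (simp add: power_mono)
  also have "\<dots> \<le> 2 * (cmod a)\<^sup>2 + 2 * (cmod b)\<^sup>2"
    using sum_squares_bound[of "cmod a" "cmod b"] by (simp add: power2_sum)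
  finally show ?thesis .
qed

lemma l2_add: "x \<in> l2 \<Longrightarrow> y \<in> l2 \<Longrightarrow> (\<lambda>n. x n + y n) \<in> l2"
  unfolding l2_iff
  by (rule summable_comparison_test[where g="\<lambda>n. 2 * (cmod (x n))\<^sup>2 + 2 * (cmod (y n))\<^sup>2"])
     (auto intro!: summable_add summable_mult sq_add_le)

lemma l2_scale: "x \<in> l2 \<Longrightarrow> (\<lambda>n. c * x n) \<in> l2"
  unfolding l2_iff by (simp add: norm_mult power_mult_distrib summable_mult)

lemma l2_uminus: "x \<in> l2 \<Longrightarrow> (\<lambda>n. - x n) \<in> l2"
  unfolding l2_iff by simp

lemma l2_diff: "x \<in> l2 \<Longrightarrow> y \<in> l2 \<Longrightarrow> (\<lambda>n. x n - y n) \<in> l2"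
  using l2_add[OF _ l2_uminus] by simp

lemma l2_zero: "(\<lambda>n. 0) \<in> l2"
  unfolding l2_iff by simp

lemma l2_sum: "finite A \<Longrightarrow> (\<And>k. k \<in> A \<Longrightarrow> f k \<in> l2) \<Longrightarrow> (\<lambda>n. \<Sum>k\<in>A. f k n) \<in> l2"
  by (induction A rule: finite_induct) (auto simp: l2_zero intro: l2_add)

lemma summable_inner: "x \<in> l2 \<Longrightarrow> y \<in> l2 \<Longrightarrow> summable (\<lambda>n. x n * cnj (y n))"
proof -
  assume x: "x \<in> l2" and y: "y \<in> l2"
  have "summable (\<lambda>n. norm (x n * cnj (y n)))"
  proof (rule summable_comparison_test[where g="\<lambda>n. (cmod (x n))\<^sup>2 + (cmod (y n))\<^sup>2"])
    show "\<exists>N. \<forall>n\<ge>N. norm (norm (x n * cnj (y n))) \<le> (cmod (x n))\<^sup>2 + (cmod (y n))\<^sup>2"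
    proof (intro exI allI impI)
      fix n :: nat
      have "2 * cmod (x n) * cmod (y n) \<le> (cmod (x n))\<^sup>2 + (cmod (y n))\<^sup>2" by (rule sum_squares_bound)
      moreover have "0 \<le> cmod (x n) * cmod (y n)" by simp
      moreover have "norm (norm (x n * cnj (y n))) = cmod (x n) * cmod (y n)" by (simp add: norm_mult)
      ultimately show "norm (norm (x n * cnj (y n))) \<le> (cmod (x n))\<^sup>2 + (cmod (y n))\<^sup>2"
        by linarith
    qed
    show "summable (\<lambda>n. (cmod (x n))\<^sup>2 + (cmod (y n))\<^sup>2)"
      using x y by (auto simp: l2_iff intro: summable_add)
  qed
  thus ?thesis by (rule summable_norm_cancel)
qed

lemma inner_add_left: "x \<in> l2 \<Longrightarrow> y \<in> l2 \<Longrightarrow> z \<in> l2 \<Longrightarrow>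
  l2_inner (\<lambda>n. x n + y n) z = l2_inner x z + l2_inner y z"
proof -
  assume a: "x \<in> l2" "y \<in> l2" "z \<in> l2"
  have "(\<lambda>n. (x n + y n) * cnj (z n)) = (\<lambda>n. x n * cnj (z n) + y n * cnj (z n))"
    by (simp add: distrib_right)
  thus ?thesis unfolding l2_inner_def
    using suminf_add[OF summable_inner[OF a(1,3)] summable_inner[OF a(2,3)]] by simp
qed

lemma inner_scale_left: "x \<in> l2 \<Longrightarrow> z \<in> l2 \<Longrightarrow>
  l2_inner (\<lambda>n. c * x n) z = c * l2_inner x z"
  unfolding l2_inner_def
  by (subst suminf_mult[symmetric]) (auto simp: summable_inner mult.assoc)

lemma inner_commute: "x \<in> l2 \<Longrightarrow> y \<in> l2 \<Longrightarrow> l2_inner y x = cnj (l2_inner x y)"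
proof -
  assume x: "x \<in> l2" and y: "y \<in> l2"
  have "(\<lambda>n. x n * cnj (y n)) sums l2_inner x y"
    unfolding l2_inner_def using summable_inner[OF x y] by (rule summable_sums)
  hence "(\<lambda>n. cnj (x n * cnj (y n))) sums cnj (l2_inner x y)" by (simp only: sums_cnj)
  hence "(\<lambda>n. y n * cnj (x n)) sums cnj (l2_inner x y)" by (simp add: mult.commute)
  thus ?thesis unfolding l2_inner_def by (simp add: sums_iff)
qed

lemma inner_self: "x \<in> l2 \<Longrightarrow> l2_inner x x = complex_of_real ((l2_norm x)\<^sup>2)"
proof -
  assume x: "x \<in> l2"
  have e: "(\<lambda>n. x n * cnj (x n)) = (\<lambda>n. complex_of_real ((cmod (x n))\<^sup>2))"
    by (rule ext) (rule complex_norm_square[symmetric])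
  have s: "summable (\<lambda>n. (cmod (x n))\<^sup>2)" using x by (simp add: l2_iff)
  have "(\<Sum>n. (cmod (x n))\<^sup>2) \<ge> 0" using s by (intro suminf_nonneg) auto
  hence "(l2_norm x)\<^sup>2 = (\<Sum>n. (cmod (x n))\<^sup>2)" unfolding l2_norm_def by simp
  moreover have "l2_inner x x = complex_of_real (\<Sum>n. (cmod (x n))\<^sup>2)"
    unfolding l2_inner_def e by (rule suminf_of_real[OF s, symmetric])
  ultimately show ?thesis by simp
qed

lemma inner_zero_left: "z \<in> l2 \<Longrightarrow> l2_inner (\<lambda>n. 0) z = 0"
  by (simp add: l2_inner_def)

lemma inner_sum_left: "finite A \<Longrightarrow> (\<And>k. k \<in> A \<Longrightarrow> f k \<in> l2) \<Longrightarrow> z \<in> l2 \<Longrightarrow>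
  l2_inner (\<lambda>n. \<Sum>k\<in>A. f k n) z = (\<Sum>k\<in>A. l2_inner (f k) z)"
proof (induction A rule: finite_induct)
  case empty then show ?case by (simp add: inner_zero_left)
next
  case (insert a A)
  have "l2_inner (\<lambda>n. \<Sum>k\<in>insert a A. f k n) z = l2_inner (\<lambda>n. f a n + (\<Sum>k\<in>A. f k n)) z"
    using insert by simp
  also have "\<dots> = l2_inner (f a) z + l2_inner (\<lambda>n. \<Sum>k\<in>A. f k n) z"
    using insert by (intro inner_add_left l2_sum) auto
  finally show ?case using insert by simp
qed

lemma l2_norm_nonneg: "x \<in> l2 \<Longrightarrow> l2_norm x \<ge> 0"
  unfolding l2_norm_def l2_iff by (intro real_sqrt_ge_zero suminf_nonneg) simp_all



definition posform :: "(vec \<Rightarrow> vec \<Rightarrow> complex) \<Rightarrow> bool" where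
 "posform B \<longleftrightarrow> (\<forall>x\<in>l2. \<forall>y\<in>l2. \<forall>z\<in>l2. B (\<lambda>n. x n + y n) z = B x z + B y z) \<and>
    (\<forall>x\<in>l2. \<forall>z\<in>l2. \<forall>c. B (\<lambda>n. c * x n) z = c * B x z) \<and>
    (\<forall>x\<in>l2. \<forall>y\<in>l2. B y x = cnj (B x y)) \<and> (\<forall>x\<in>l2. 0 \<le> Re (B x x))"

lemma quad_disc:
  fixes A P Q :: real
  assumes h: "\<And>t. 0 \<le> A - 2*t*P + t^2*Q" and Q: "Q \<ge> 0"
  shows "P^2 \<le> A * Q"
proof (cases "Q = 0")
  case True
  have "P = 0"
  proof (rule ccontr)
    assume "P \<noteq> 0"
    have "0 \<le> A - 2*((A+1)/(2*P))*P + ((A+1)/(2*P))^2*Q" by (rule h)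
    also have "\<dots> = -1" using \<open>P \<noteq> 0\<close> True by (simp add: field_simps)
    finally show False by simp
  qed
  thus ?thesis using True by simp
next
  case False
  hence Qp: "Q > 0" using Q by simp
  have "0 \<le> A - 2*(P/Q)*P + (P/Q)^2*Q" by (rule h)
  also have "\<dots> = A - P^2/Q" using Qp by (simp add: field_simps power2_eq_square)
  finally have "P^2/Q \<le> A" by simp
  thus ?thesis using Qp by (simp add: field_simps)
qed

lemma posform_add: assumes "posform B" "x \<in> l2" "y \<in> l2" "z \<in> l2"
  shows "B (\<lambda>n. x n + y n) z = B x z + B y z"
proof -
  have h: "\<forall>x\<in>l2. \<forall>y\<in>l2. \<forall>z\<in>l2. B (\<lambda>n. x n + y n) z = B x z + B y z"
    using assms(1) unfolding posform_def by (rule conjunct1)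
  show ?thesis using bspec[OF bspec[OF bspec[OF h assms(2)] assms(3)] assms(4)] .
qed
lemma posform_scale: assumes "posform B" "x \<in> l2" "z \<in> l2"
  shows "B (\<lambda>n. c * x n) z = c * B x z"
proof -
  have h: "\<forall>x\<in>l2. \<forall>z\<in>l2. \<forall>c. B (\<lambda>n. c * x n) z = c * B x z"
    using assms(1) unfolding posform_def by (rule conjunct1[OF conjunct2])
  show ?thesis using spec[OF bspec[OF bspec[OF h assms(2)] assms(3)]] .
qed
lemma posform_herm: assumes "posform B" "x \<in> l2" "y \<in> l2"
  shows "B y x = cnj (B x y)"
proof -
  have h: "\<forall>x\<in>l2. \<forall>y\<in>l2. B y x = cnj (B x y)"
    using assms(1) unfolding posform_def by (rule conjunct1[OF conjunct2[OF conjunct2]])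
  show ?thesis using bspec[OF bspec[OF h assms(2)] assms(3)] .
qed
lemma posform_pos: assumes "posform B" "x \<in> l2" shows "0 \<le> Re (B x x)"
proof -
  have h: "\<forall>x\<in>l2. 0 \<le> Re (B x x)"
    using assms(1) unfolding posform_def by (rule conjunct2[OF conjunct2[OF conjunct2]])
  show ?thesis using bspec[OF h assms(2)] .
qed

lemma posform_real: "posform B \<Longrightarrow> x \<in> l2 \<Longrightarrow> B x x = complex_of_real (Re (B x x))"
proof -
  assume a: "posform B" "x \<in> l2"
  have "B x x = cnj (B x x)" using posform_herm[OF a a(2)] .
  hence "Im (B x x) = - Im (B x x)" by (metis cnj.simps(2))
  hence "Im (B x x) = 0" by simp
  thus ?thesis by (simp add: complex_eq_iff)
qed

lemma posform_add_right: "posform B \<Longrightarrow> x \<in> l2 \<Longrightarrow> y \<in> l2 \<Longrightarrow> z \<in> l2 \<Longrightarrow>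
   B z (\<lambda>n. x n + y n) = B z x + B z y"
proof -
  assume a: "posform B" "x \<in> l2" "y \<in> l2" "z \<in> l2"
  have "B z (\<lambda>n. x n + y n) = cnj (B (\<lambda>n. x n + y n) z)" using a by (intro posform_herm l2_add) auto
  also have "\<dots> = cnj (B x z) + cnj (B y z)" using a by (simp add: posform_add)
  also have "\<dots> = B z x + B z y" using posform_herm[OF a(1) a(4) a(2)] posform_herm[OF a(1) a(4) a(3)] by simp
  finally show ?thesis .
qed

lemma posform_scale_right: "posform B \<Longrightarrow> x \<in> l2 \<Longrightarrow> z \<in> l2 \<Longrightarrow>
   B z (\<lambda>n. c * x n) = cnj c * B z x"
proof -
  assume a: "posform B" "x \<in> l2" "z \<in> l2"
  have "B z (\<lambda>n. c * x n) = cnj (B (\<lambda>n. c * x n) z)" using a by (intro posform_herm l2_scale) auto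
  also have "\<dots> = cnj c * cnj (B x z)" using a by (simp add: posform_scale)
  also have "\<dots> = cnj c * B z x" using posform_herm[OF a(1) a(3) a(2)] by simp
  finally show ?thesis .
qed

lemma posform_CS:
  assumes B: "posform B" and x: "x \<in> l2" and y: "y \<in> l2"
  shows "(cmod (B x y))\<^sup>2 \<le> Re (B x x) * Re (B y y)"
proof -
  define b where "b = B x y"
  define p where "p = (cmod b)\<^sup>2"
  have key: "0 \<le> Re (B x x) - 2*t*p + t^2*(p * Re (B y y))" for t :: real
  proof -
    define s where "s = - (complex_of_real t * b)"
    have sy: "(\<lambda>n. s * y n) \<in> l2" using y by (rule l2_scale)
    have v: "(\<lambda>n. x n + s * y n) \<in> l2" using x sy by (rule l2_add)
    have "B (\<lambda>n. x n + s * y n) (\<lambda>n. x n + s * y n)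
        = B x (\<lambda>n. x n + s * y n) + s * B y (\<lambda>n. x n + s * y n)"
      using posform_add[OF B x sy v] posform_scale[OF B y v] by simp
    also have "\<dots> = B x x + cnj s * B x y + s * (B y x + cnj s * B y y)"
      using posform_add_right[OF B x sy x] posform_scale_right[OF B y x]
        posform_add_right[OF B x sy y] posform_scale_right[OF B y y] by simp
    also have "\<dots> = B x x + cnj s * b + s * cnj b + s * cnj s * B y y"
      unfolding b_def posform_herm[OF B x y] by (simp add: distrib_left mult.assoc)
    finally have e: "B (\<lambda>n. x n + s * y n) (\<lambda>n. x n + s * y n)
        = B x x + cnj s * b + s * cnj b + s * cnj s * B y y" .
    have bb: "b * cnj b = complex_of_real p" unfolding p_def by (rule complex_norm_square[symmetric])
    have c1: "cnj s * b = - complex_of_real (t * p)"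
    proof -
      have "cnj s * b = - (complex_of_real t * (b * cnj b))" by (simp add: s_def algebra_simps)
      thus ?thesis using bb by simp
    qed
    have c2: "s * cnj b = - complex_of_real (t * p)"
    proof -
      have "s * cnj b = - (complex_of_real t * (b * cnj b))" by (simp add: s_def algebra_simps)
      thus ?thesis using bb by simp
    qed
    have c3: "s * cnj s = complex_of_real (t^2 * p)"
    proof -
      have "s * cnj s = complex_of_real t * complex_of_real t * (b * cnj b)"
        by (simp add: s_def algebra_simps)
      thus ?thesis using bb by (simp add: power2_eq_square)
    qed
    have "0 \<le> Re (B (\<lambda>n. x n + s * y n) (\<lambda>n. x n + s * y n))" using B v by (rule posform_pos)
    also have "\<dots> = Re (B x x) - 2*t*p + t^2*(p * Re (B y y))"
      unfolding e c1 c2 c3 by simp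
    finally show ?thesis .
  qed
  have "p^2 \<le> Re (B x x) * (p * Re (B y y))"
    by (rule quad_disc[OF key]) (use posform_pos[OF B y] in \<open>simp add: p_def\<close>)
  moreover have "0 \<le> Re (B x x)" "0 \<le> Re (B y y)" using B x y by (auto intro: posform_pos)
  ultimately have h: "p * p \<le> p * (Re (B x x) * Re (B y y))" "0 \<le> Re (B x x) * Re (B y y)"
    by (simp_all add: power2_eq_square mult_ac)
  have "p \<le> Re (B x x) * Re (B y y)"
  proof (cases "p = 0")
    case True then show ?thesis using h(2) by simp
  next
    case False
    hence "p > 0" by (simp add: p_def)
    thus ?thesis using h(1) by (simp add: mult_le_cancel_left)
  qed
  thus ?thesis by (simp add: p_def b_def)
qed



lemma inner_posform: "posform l2_inner"
  unfolding posform_def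
proof (intro conjI ballI allI)
  fix x y z assume "x \<in> l2" "y \<in> l2" "z \<in> l2"
  thus "l2_inner (\<lambda>n. x n + y n) z = l2_inner x z + l2_inner y z" by (rule inner_add_left)
next
  fix x z c assume "x \<in> l2" "z \<in> l2"
  thus "l2_inner (\<lambda>n. c * x n) z = c * l2_inner x z" by (rule inner_scale_left)
next
  fix x y assume "x \<in> l2" "y \<in> l2"
  thus "l2_inner y x = cnj (l2_inner x y)" by (rule inner_commute)
next
  fix x assume "x \<in> l2"
  thus "0 \<le> Re (l2_inner x x)" by (simp add: inner_self)
qed

lemma inner_CS: assumes "x \<in> l2" "y \<in> l2"
  shows "cmod (l2_inner x y) \<le> l2_norm x * l2_norm y"
proof -
  have rx: "Re (l2_inner x x) = (l2_norm x)\<^sup>2" using inner_self[OF assms(1)] by simp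
  have ry: "Re (l2_inner y y) = (l2_norm y)\<^sup>2" using inner_self[OF assms(2)] by simp
  have "(cmod (l2_inner x y))\<^sup>2 \<le> Re (l2_inner x x) * Re (l2_inner y y)"
    by (rule posform_CS[OF inner_posform assms])
  also have "\<dots> = (l2_norm x * l2_norm y)\<^sup>2"
    unfolding rx ry by (rule power_mult_distrib[symmetric])
  finally have h: "(cmod (l2_inner x y))\<^sup>2 \<le> (l2_norm x * l2_norm y)\<^sup>2" .
  have "0 \<le> l2_norm x * l2_norm y"
    by (rule mult_nonneg_nonneg[OF l2_norm_nonneg[OF assms(1)] l2_norm_nonneg[OF assms(2)]])
  thus ?thesis using h by (rule power2_le_imp_le[rotated])
qed

lemma inner_diff_left: assumes a: "x \<in> l2" "y \<in> l2" "z \<in> l2"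
  shows "l2_inner (\<lambda>n. x n - y n) z = l2_inner x z - l2_inner y z"
proof -
  have "l2_inner (\<lambda>n. x n - y n) z = l2_inner (\<lambda>n. x n + (-1) * y n) z" by simp
  also have "\<dots> = l2_inner x z + l2_inner (\<lambda>n. (-1) * y n) z"
    by (rule inner_add_left[OF a(1) l2_scale[OF a(2)] a(3)])
  also have "\<dots> = l2_inner x z + (-1) * l2_inner y z"
    by (simp only: inner_scale_left[OF a(2) a(3)])
  finally show ?thesis by simp
qed

lemma re_cnj_sq: "Re (cnj z * z) = (cmod z)\<^sup>2"
  using complex_norm_square[of z] by (metis Re_complex_of_real mult.commute)

lemma inner_add_right: "x \<in> l2 \<Longrightarrow> y \<in> l2 \<Longrightarrow> z \<in> l2 \<Longrightarrow>
   l2_inner z (\<lambda>n. x n + y n) = l2_inner z x + l2_inner z y"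
  by (rule posform_add_right[OF inner_posform])

lemma inner_scale_right: "x \<in> l2 \<Longrightarrow> z \<in> l2 \<Longrightarrow>
   l2_inner z (\<lambda>n. c * x n) = cnj c * l2_inner z x"
  by (rule posform_scale_right[OF inner_posform])

lemma inner_zero_right: "z \<in> l2 \<Longrightarrow> l2_inner z (\<lambda>n. 0) = 0"
  by (simp add: l2_inner_def)

lemma inner_sum_right: "finite A \<Longrightarrow> (\<And>k. k \<in> A \<Longrightarrow> f k \<in> l2) \<Longrightarrow> z \<in> l2 \<Longrightarrow>
  l2_inner z (\<lambda>n. \<Sum>k\<in>A. f k n) = (\<Sum>k\<in>A. l2_inner z (f k))"
proof (induction A rule: finite_induct)
  case empty then show ?case by (simp add: inner_zero_right)
next
  case (insert a A)
  have "l2_inner z (\<lambda>n. \<Sum>k\<in>insert a A. f k n) = l2_inner z (\<lambda>n. f a n + (\<Sum>k\<in>A. f k n))"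
    using insert by simp
  also have "\<dots> = l2_inner z (f a) + l2_inner z (\<lambda>n. \<Sum>k\<in>A. f k n)"
    using insert by (intro inner_add_right l2_sum) auto
  finally show ?case using insert by simp
qed

lemma ons_l2: "orthonormal_seq u \<Longrightarrow> u k \<in> l2"
  by (simp add: orthonormal_seq_def)
lemma ons_inner: "orthonormal_seq u \<Longrightarrow> l2_inner (u i) (u j) = (if i = j then 1 else 0)"
  by (simp add: orthonormal_seq_def)

definition proj :: "(nat \<Rightarrow> vec) \<Rightarrow> nat set \<Rightarrow> (nat \<Rightarrow> complex) \<Rightarrow> vec" where
  "proj u A c = (\<lambda>n. \<Sum>k\<in>A. c k * u k n)"

lemma proj_l2: "orthonormal_seq u \<Longrightarrow> finite A \<Longrightarrow> proj u A c \<in> l2"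
  unfolding proj_def by (intro l2_sum l2_scale ons_l2)

lemma proj_inner: assumes u: "orthonormal_seq u" and A: "finite A"
  shows "l2_inner (proj u A c) (u j) = (if j \<in> A then c j else 0)"
proof -
  have "l2_inner (proj u A c) (u j) = (\<Sum>k\<in>A. l2_inner (\<lambda>n. c k * u k n) (u j))"
    unfolding proj_def using A by (intro inner_sum_left l2_scale ons_l2[OF u]) auto
  also have "\<dots> = (\<Sum>k\<in>A. c k * (if k = j then 1 else 0))"
    using u by (simp add: inner_scale_left ons_l2[OF u] ons_inner[OF u])
  also have "\<dots> = (\<Sum>k\<in>A. if k = j then c j else 0)"
    by (intro sum.cong) auto
  also have "\<dots> = (if j \<in> A then c j else 0)"
    using A by (simp add: sum.delta)
  finally show ?thesis .
qed

lemma inner_proj_right: assumes u: "orthonormal_seq u" and A: "finite A" and x: "x \<in> l2"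
  shows "l2_inner x (proj u A c) = (\<Sum>k\<in>A. cnj (c k) * l2_inner x (u k))"
proof -
  have "l2_inner x (proj u A c) = (\<Sum>k\<in>A. l2_inner x (\<lambda>n. c k * u k n))"
    unfolding proj_def using A x by (intro inner_sum_right l2_scale ons_l2[OF u]) auto
  also have "\<dots> = (\<Sum>k\<in>A. cnj (c k) * l2_inner x (u k))"
    using u x by (simp add: inner_scale_right ons_l2[OF u])
  finally show ?thesis .
qed

lemma inner_proj_left: assumes u: "orthonormal_seq u" and A: "finite A" and x: "x \<in> l2"
  shows "l2_inner (proj u A c) x = (\<Sum>k\<in>A. c k * l2_inner (u k) x)"
proof -
  have "l2_inner (proj u A c) x = (\<Sum>k\<in>A. l2_inner (\<lambda>n. c k * u k n) x)"
    unfolding proj_def using A x by (intro inner_sum_left l2_scale ons_l2[OF u]) auto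
  also have "\<dots> = (\<Sum>k\<in>A. c k * l2_inner (u k) x)"
    using u x by (simp add: inner_scale_left ons_l2[OF u])
  finally show ?thesis .
qed

lemma proj_norm: assumes u: "orthonormal_seq u" and A: "finite A"
  shows "Re (l2_inner (proj u A c) (proj u A c)) = (\<Sum>k\<in>A. (cmod (c k))\<^sup>2)"
proof -
  have "l2_inner (proj u A c) (proj u A c) = (\<Sum>k\<in>A. cnj (c k) * l2_inner (proj u A c) (u k))"
    by (rule inner_proj_right[OF u A proj_l2[OF u A]])
  also have "\<dots> = (\<Sum>k\<in>A. cnj (c k) * c k)"
    using A by (intro sum.cong) (simp_all add: proj_inner[OF u A])
  finally show ?thesis by (simp only: Re_sum re_cnj_sq)
qed

lemma bessel_identity: assumes u: "orthonormal_seq u" and A: "finite A" and x: "x \<in> l2"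
  defines "c \<equiv> \<lambda>k. l2_inner x (u k)"
  shows "Re (l2_inner x x) = Re (l2_inner (\<lambda>n. x n - proj u A c n) (\<lambda>n. x n - proj u A c n))
            + (\<Sum>k\<in>A. (cmod (c k))\<^sup>2)"
proof -
  define P where "P = proj u A c"
  define z where "z = (\<lambda>n. x n - P n)"
  have P: "P \<in> l2" unfolding P_def by (rule proj_l2[OF u A])
  have z: "z \<in> l2" unfolding z_def using x P by (rule l2_diff)
  have xe: "x = (\<lambda>n. z n + P n)" by (simp add: z_def)
  have zu: "l2_inner z (u k) = 0" if "k \<in> A" for k
  proof -
    have "l2_inner z (u k) = l2_inner x (u k) - l2_inner P (u k)"
      unfolding z_def by (rule inner_diff_left[OF x P ons_l2[OF u]])
    also have "l2_inner P (u k) = c k" unfolding P_def using proj_inner[OF u A] that by simp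
    finally show ?thesis by (simp add: c_def)
  qed
  have zP: "l2_inner z P = 0"
    unfolding P_def by (simp add: inner_proj_right[OF u A z] zu)
  have Px: "l2_inner P x = (\<Sum>k\<in>A. cnj (c k) * c k)"
    unfolding P_def inner_proj_left[OF u A x]
    by (intro sum.cong refl) (simp add: c_def inner_commute[OF x ons_l2[OF u]])
  have "l2_inner x x = l2_inner z x + l2_inner P x"
    by (subst (1) xe) (rule inner_add_left[OF z P x])
  also have "l2_inner z x = l2_inner z z + l2_inner z P"
    by (subst (1) xe) (rule inner_add_right[OF z P z])
  finally have "l2_inner x x = l2_inner z z + (\<Sum>k\<in>A. cnj (c k) * c k)"
    using zP Px by simp
  hence "Re (l2_inner x x) = Re (l2_inner z z) + (\<Sum>k\<in>A. Re (cnj (c k) * c k))" by simp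
  moreover have "Re (cnj (c k) * c k) = (cmod (c k))\<^sup>2" for k
    by (rule re_cnj_sq)
  ultimately show ?thesis by (simp add: z_def P_def)
qed

lemma bessel: assumes u: "orthonormal_seq u" and A: "finite A" and x: "x \<in> l2"
  shows "(\<Sum>k\<in>A. (cmod (l2_inner x (u k)))\<^sup>2) \<le> (l2_norm x)\<^sup>2"
proof -
  define c where "c = (\<lambda>k. l2_inner x (u k))"
  have "0 \<le> Re (l2_inner (\<lambda>n. x n - proj u A c n) (\<lambda>n. x n - proj u A c n))"
    by (rule posform_pos[OF inner_posform l2_diff[OF x proj_l2[OF u A]]])
  thus ?thesis using bessel_identity[OF u A x] x by (simp add: c_def inner_self)
qed



lemma sum_lessThan_diff: "(M::nat) \<le> L \<Longrightarrow> (\<Sum>k<L. f k) - (\<Sum>k<M. f k) = (\<Sum>k\<in>{M..<L}. (f k :: 'a::ab_group_add))"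
  using sum_diff_nat_ivl[of 0 M L f] by (simp add: atLeast0LessThan)

lemma summable_prod_sq: fixes a b :: "nat \<Rightarrow> complex"
  assumes "summable (\<lambda>k. (cmod (a k))\<^sup>2)" "summable (\<lambda>k. (cmod (b k))\<^sup>2)"
  shows "summable (\<lambda>k. a k * b k)"
proof -
  have "summable (\<lambda>n. norm (a n * b n))"
  proof (rule summable_comparison_test[where g="\<lambda>n. (cmod (a n))\<^sup>2 + (cmod (b n))\<^sup>2"])
    show "\<exists>N. \<forall>n\<ge>N. norm (norm (a n * b n)) \<le> (cmod (a n))\<^sup>2 + (cmod (b n))\<^sup>2"
    proof (intro exI allI impI)
      fix n :: nat
      have "2 * cmod (a n) * cmod (b n) \<le> (cmod (a n))\<^sup>2 + (cmod (b n))\<^sup>2" by (rule sum_squares_bound)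
      moreover have "0 \<le> cmod (a n) * cmod (b n)" by simp
      moreover have "norm (norm (a n * b n)) = cmod (a n) * cmod (b n)" by (simp add: norm_mult)
      ultimately show "norm (norm (a n * b n)) \<le> (cmod (a n))\<^sup>2 + (cmod (b n))\<^sup>2"
        by linarith
    qed
    show "summable (\<lambda>n. (cmod (a n))\<^sup>2 + (cmod (b n))\<^sup>2)"
      using assms by (intro summable_add)
  qed
  thus ?thesis by (rule summable_norm_cancel)
qed

lemma partial_le_norm: assumes "v \<in> l2"
  shows "(\<Sum>n<N. (cmod (v n))\<^sup>2) \<le> Re (l2_inner v v)"
proof -
  have s: "summable (\<lambda>n. (cmod (v n))\<^sup>2)" using assms by (simp add: l2_iff)
  have "(\<Sum>n<N. (cmod (v n))\<^sup>2) \<le> (\<Sum>n. (cmod (v n))\<^sup>2)"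
    by (rule sum_le_suminf[OF s]) auto
  also have "\<dots> = (l2_norm v)\<^sup>2"
    unfolding l2_norm_def using suminf_nonneg[OF s] by simp
  also have "\<dots> = Re (l2_inner v v)" using inner_self[OF assms] by simp
  finally show ?thesis .
qed

lemma norm_sq_re: "v \<in> l2 \<Longrightarrow> (l2_norm v)\<^sup>2 = Re (l2_inner v v)"
  using inner_self by simp

lemma coeff_bessel_summable: assumes u: "orthonormal_seq u" and x: "x \<in> l2"
  shows "summable (\<lambda>k. (cmod (l2_inner x (u k)))\<^sup>2)"
  by (rule bounded_imp_summable[where B="(l2_norm x)\<^sup>2"]) (auto intro: bessel[OF u _ x])

lemma coeff_bessel_le: assumes u: "orthonormal_seq u" and x: "x \<in> l2"
  shows "(\<Sum>k. (cmod (l2_inner x (u k)))\<^sup>2) \<le> (l2_norm x)\<^sup>2"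
  by (rule suminf_le_const[OF coeff_bessel_summable[OF u x]]) (auto intro: bessel[OF u _ x])

definition unitv :: "nat \<Rightarrow> vec" where "unitv n = (\<lambda>m. if m = n then 1 else 0)"

lemma unitv_l2: "unitv n \<in> l2"
proof -
  have "(\<lambda>m. (cmod (unitv n m))\<^sup>2) = (\<lambda>m. if m = n then 1 else 0)"
    by (auto simp: unitv_def)
  thus ?thesis unfolding l2_iff by simp
qed

lemma unitv_norm: "l2_norm (unitv n) = 1"
proof -
  have "(\<lambda>m. (cmod (unitv n m))\<^sup>2) = (\<lambda>m. if m = n then 1 else 0)"
    by (auto simp: unitv_def)
  moreover have "(\<lambda>m. if m = n then (1::real) else 0) sums 1" using sums_single[of n "\<lambda>_. (1::real)"] by simp
  ultimately show ?thesis unfolding l2_norm_def by (simp add: sums_iff)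
qed

lemma unitv_inner: "l2_inner (unitv n) y = cnj (y n)"
proof -
  have "(\<lambda>m. unitv n m * cnj (y m)) = (\<lambda>m. if m = n then cnj (y m) else 0)"
    by (auto simp: unitv_def)
  moreover have "(\<lambda>m. if m = n then cnj (y m) else 0) sums cnj (y n)" by (rule sums_single)
  ultimately show ?thesis unfolding l2_inner_def by (simp add: sums_iff)
qed

lemma column_summable: assumes u: "orthonormal_seq u"
  shows "summable (\<lambda>k. (cmod (u k n))\<^sup>2)"
  using coeff_bessel_summable[OF u unitv_l2[of n]] by (simp add: unitv_inner)

lemma parseval:
  assumes u: "orthonormal_basis u" and x: "x \<in> l2"
  defines "c \<equiv> \<lambda>k. l2_inner x (u k)"
  shows "(\<lambda>M. l2_norm (\<lambda>n. x n - proj u {..<M} c n)) \<longlonglongrightarrow> 0"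
proof -
  have uo: "orthonormal_seq u" using u by (simp add: orthonormal_basis_def)
  have ucomp: "\<And>w. w \<in> l2 \<Longrightarrow> (\<forall>k. l2_inner w (u k) = 0) \<Longrightarrow> w = (\<lambda>n. 0)"
    using u by (simp add: orthonormal_basis_def)
  have cs: "summable (\<lambda>k. (cmod (c k))\<^sup>2)" unfolding c_def by (rule coeff_bessel_summable[OF uo x])
  define S where "S = (\<Sum>k. (cmod (c k))\<^sup>2)"
  define R where "R = (\<lambda>M. S - (\<Sum>k<M. (cmod (c k))\<^sup>2))"
  have R0: "R \<longlonglongrightarrow> 0"
  proof -
    have "(\<lambda>M. \<Sum>k<M. (cmod (c k))\<^sup>2) \<longlonglongrightarrow> S" unfolding S_def by (rule summable_LIMSEQ[OF cs])
    hence "(\<lambda>M. S - (\<Sum>k<M. (cmod (c k))\<^sup>2)) \<longlonglongrightarrow> S - S" by (intro tendsto_diff tendsto_const)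
    thus ?thesis unfolding R_def by simp
  qed
  have Rge: "(\<Sum>k\<in>{M..<L}. (cmod (c k))\<^sup>2) \<le> R M" if "M \<le> L" for M L
  proof -
    have "(\<Sum>k<L. (cmod (c k))\<^sup>2) \<le> S" unfolding S_def by (rule sum_le_suminf[OF cs]) auto
    thus ?thesis unfolding R_def using sum_lessThan_diff[OF that, of "\<lambda>k. (cmod (c k))\<^sup>2"] by linarith
  qed
  define z where "z = (\<lambda>M n. x n - proj u {..<M} c n)"
  have zl2: "z M \<in> l2" for M unfolding z_def by (rule l2_diff[OF x proj_l2[OF uo]]) simp
  have ser: "summable (\<lambda>k. c k * u k n)" for n
    by (rule summable_prod_sq[OF cs column_summable[OF uo]])
  define w where "w = (\<lambda>n. x n - (\<Sum>k. c k * u k n))"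
  have zw: "(\<lambda>M. z M n) \<longlonglongrightarrow> w n" for n
  proof -
    have "(\<lambda>M. \<Sum>k<M. c k * u k n) \<longlonglongrightarrow> (\<Sum>k. c k * u k n)" by (rule summable_LIMSEQ[OF ser])
    hence "(\<lambda>M. x n - (\<Sum>k<M. c k * u k n)) \<longlonglongrightarrow> x n - (\<Sum>k. c k * u k n)"
      by (intro tendsto_diff tendsto_const)
    thus ?thesis unfolding z_def w_def proj_def .
  qed
  define d where "d = (\<lambda>M n. z M n - w n)"
  have zdiff: "(\<lambda>n. z M n - z L n) = proj u {M..<L} c" if "M \<le> L" for M L
  proof
    fix n
    have "z M n - z L n = (\<Sum>k<L. c k * u k n) - (\<Sum>k<M. c k * u k n)"
      unfolding z_def proj_def by simp
    also have "\<dots> = (\<Sum>k\<in>{M..<L}. c k * u k n)" by (rule sum_lessThan_diff[OF that])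
    finally show "z M n - z L n = proj u {M..<L} c n" unfolding proj_def .
  qed
  have dpart: "(\<Sum>n<N. (cmod (d M n))\<^sup>2) \<le> R M" for M N
  proof -
    have lim: "(\<lambda>L. \<Sum>n<N. (cmod (z M n - z L n))\<^sup>2) \<longlonglongrightarrow> (\<Sum>n<N. (cmod (d M n))\<^sup>2)"
      unfolding d_def by (intro tendsto_sum tendsto_power tendsto_norm tendsto_diff tendsto_const zw)
    have "\<exists>L0. \<forall>L\<ge>L0. (\<Sum>n<N. (cmod (z M n - z L n))\<^sup>2) \<le> R M"
    proof (intro exI allI impI)
      fix L assume hML: "M \<le> L"
      have "(\<Sum>n<N. (cmod (z M n - z L n))\<^sup>2) = (\<Sum>n<N. (cmod (proj u {M..<L} c n))\<^sup>2)"
        using zdiff[OF hML] by (metis (no_types, lifting))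
      also have "\<dots> \<le> Re (l2_inner (proj u {M..<L} c) (proj u {M..<L} c))"
        by (rule partial_le_norm[OF proj_l2[OF uo]]) simp
      also have "\<dots> = (\<Sum>k\<in>{M..<L}. (cmod (c k))\<^sup>2)" by (rule proj_norm[OF uo]) simp
      also have "\<dots> \<le> R M" by (rule Rge[OF hML])
      finally show "(\<Sum>n<N. (cmod (z M n - z L n))\<^sup>2) \<le> R M" .
    qed
    thus ?thesis by (rule LIMSEQ_le_const2[OF lim])
  qed
  have dsum: "summable (\<lambda>n. (cmod (d M n))\<^sup>2)" for M
  proof (rule bounded_imp_summable[where B="R M"])
    fix n
    show "0 \<le> (cmod (d M n))\<^sup>2" by simp
    show "(\<Sum>k\<le>n. (cmod (d M k))\<^sup>2) \<le> R M"
      using dpart[of M "Suc n"] by (simp only: lessThan_Suc_atMost)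
  qed
  have dl2: "d M \<in> l2" for M using dsum by (simp add: l2_iff)
  have dnorm: "Re (l2_inner (d M) (d M)) \<le> R M" for M
  proof -
    have "Re (l2_inner (d M) (d M)) = (l2_norm (d M))\<^sup>2" by (rule norm_sq_re[OF dl2, symmetric])
    also have "\<dots> = (\<Sum>n. (cmod (d M n))\<^sup>2)"
      unfolding l2_norm_def using suminf_nonneg[OF dsum] by simp
    also have "\<dots> \<le> R M" by (rule suminf_le_const[OF dsum dpart])
    finally show ?thesis .
  qed
  have Rnn: "0 \<le> R M" for M using dnorm[of M] posform_pos[OF inner_posform dl2[of M]] by linarith
  have wz: "w = (\<lambda>n. z M n - d M n)" for M unfolding d_def by simp
  have wl2: "w \<in> l2" using wz[of 0] l2_diff[OF zl2 dl2] by metis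
  have worth: "l2_inner w (u j) = 0" for j
  proof -
    have "cmod (l2_inner w (u j)) \<le> sqrt (R M)" if "j < M" for M
    proof -
      have "l2_inner (z M) (u j) = c j - l2_inner (proj u {..<M} c) (u j)"
        unfolding z_def c_def by (rule inner_diff_left[OF x proj_l2[OF uo] ons_l2[OF uo]]) simp
      also have "\<dots> = 0" using proj_inner[OF uo, of "{..<M}" c j] that by simp
      finally have z0: "l2_inner (z M) (u j) = 0" .
      have "l2_inner w (u j) = l2_inner (z M) (u j) - l2_inner (d M) (u j)"
        by (subst wz[of M]) (rule inner_diff_left[OF zl2 dl2 ons_l2[OF uo]])
      hence "cmod (l2_inner w (u j)) = cmod (l2_inner (d M) (u j))" using z0 by simp
      also have "\<dots> \<le> l2_norm (d M) * l2_norm (u j)" by (rule inner_CS[OF dl2 ons_l2[OF uo]])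
      also have "l2_norm (u j) = 1"
      proof -
        have "(l2_norm (u j))\<^sup>2 = 1" using norm_sq_re[OF ons_l2[OF uo]] ons_inner[OF uo] by simp
        hence "l2_norm (u j) = 1 \<or> l2_norm (u j) = - 1" by (simp add: power2_eq_1_iff)
        moreover have "0 \<le> l2_norm (u j)" by (rule l2_norm_nonneg[OF ons_l2[OF uo]])
        ultimately show ?thesis by linarith
      qed
      also have "l2_norm (d M) = sqrt ((l2_norm (d M))\<^sup>2)" using l2_norm_nonneg[OF dl2] by simp
      also have "\<dots> \<le> sqrt (R M)" using dnorm[of M] norm_sq_re[OF dl2] by simp
      finally show ?thesis by simp
    qed
    hence ev: "\<exists>N. \<forall>M\<ge>N. cmod (l2_inner w (u j)) \<le> sqrt (R M)" by (intro exI[of _ "Suc j"]) auto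
    have "(\<lambda>M. sqrt (R M)) \<longlonglongrightarrow> sqrt 0" by (intro tendsto_real_sqrt R0)
    hence lim0: "(\<lambda>M. sqrt (R M)) \<longlonglongrightarrow> 0" by simp
    have "cmod (l2_inner w (u j)) \<le> 0" by (rule LIMSEQ_le_const[OF lim0 ev])
    thus ?thesis by simp
  qed
  have w0: "w = (\<lambda>n. 0)" by (rule ucomp[OF wl2]) (simp add: worth)
  have dz: "d M = z M" for M unfolding d_def w0 by (rule ext) simp
  have bound: "l2_norm (z M) \<le> sqrt (R M)" for M
  proof -
    have "l2_norm (z M) = sqrt ((l2_norm (z M))\<^sup>2)" using l2_norm_nonneg[OF zl2] by simp
    also have "\<dots> = sqrt (Re (l2_inner (d M) (d M)))" using norm_sq_re[OF zl2[of M]] dz[of M] by simp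
    also have "\<dots> \<le> sqrt (R M)" using dnorm[of M] by simp
    finally show ?thesis .
  qed
  have "(\<lambda>M. sqrt (R M)) \<longlonglongrightarrow> sqrt 0" by (intro tendsto_real_sqrt R0)
  hence lim0: "(\<lambda>M. sqrt (R M)) \<longlonglongrightarrow> 0" by simp
  have e1: "\<forall>\<^sub>F M in sequentially. (0::real) \<le> l2_norm (z M)"
    by (rule always_eventually) (intro allI l2_norm_nonneg[OF zl2])
  have e2: "\<forall>\<^sub>F M in sequentially. l2_norm (z M) \<le> sqrt (R M)"
    by (rule always_eventually) (intro allI bound)
  have "(\<lambda>M. l2_norm (z M)) \<longlonglongrightarrow> 0"
    by (rule tendsto_sandwich[OF e1 e2 tendsto_const lim0])
  thus ?thesis unfolding z_def .
qed



lemma posform_zero: "posform B \<Longrightarrow> z \<in> l2 \<Longrightarrow> B (\<lambda>n. 0) z = 0"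
  using posform_scale[of B z z 0] by simp

lemma posform_sum_left: assumes B: "posform B" and z: "z \<in> l2"
  shows "finite A \<Longrightarrow> (\<And>k. k \<in> A \<Longrightarrow> f k \<in> l2) \<Longrightarrow>
  B (\<lambda>n. \<Sum>k\<in>A. f k n) z = (\<Sum>k\<in>A. B (f k) z)"
proof (induction A rule: finite_induct)
  case empty then show ?case by (simp add: posform_zero[OF B z])
next
  case (insert a A)
  have "B (\<lambda>n. \<Sum>k\<in>insert a A. f k n) z = B (\<lambda>n. f a n + (\<Sum>k\<in>A. f k n)) z"
    using insert by simp
  also have "\<dots> = B (f a) z + B (\<lambda>n. \<Sum>k\<in>A. f k n) z"
    using insert by (intro posform_add[OF B] l2_sum z) auto
  finally show ?case using insert by simp
qed

lemma posform_cmod_le: assumes B: "posform B" and x: "x \<in> l2" and y: "y \<in> l2"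
  shows "cmod (B x y) \<le> sqrt (Re (B x x)) * sqrt (Re (B y y))"
proof -
  have "cmod (B x y) = sqrt ((cmod (B x y))\<^sup>2)" by simp
  also have "\<dots> \<le> sqrt (Re (B x x) * Re (B y y))" by (rule real_sqrt_le_mono[OF posform_CS[OF B x y]])
  also have "\<dots> = sqrt (Re (B x x)) * sqrt (Re (B y y))" by (rule real_sqrt_mult)
  finally show ?thesis .
qed

lemma key_est_M:
  assumes B: "posform B" and u: "orthonormal_basis u" and x: "x \<in> l2" and nx: "l2_norm x = 1"
    and Kb: "\<And>z. z \<in> l2 \<Longrightarrow> Re (B z z) \<le> K * (l2_norm z)\<^sup>2" and K: "K \<ge> 0"
    and tsum: "(\<Sum>k\<in>{K0..<M}. Re (B (u k) (u k))) \<le> \<delta>" and KM: "K0 \<le> M"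
  shows "sqrt (Re (B x x)) \<le> (\<Sum>k<K0. cmod (l2_inner x (u k)) * sqrt (Re (B (u k) (u k)))) + sqrt \<delta>
           + sqrt K * l2_norm (\<lambda>n. x n - proj u {..<M} (\<lambda>k. l2_inner x (u k)) n)"
proof -
  have uo: "orthonormal_seq u" using u by (simp add: orthonormal_basis_def)
  define c where "c = (\<lambda>k. l2_inner x (u k))"
  define t where "t = (\<lambda>k. Re (B (u k) (u k)))"
  define \<beta> where "\<beta> = Re (B x x)"
  define P where "P = proj u {..<M} c"
  define z where "z = (\<lambda>n. x n - P n)"
  have P: "P \<in> l2" unfolding P_def by (rule proj_l2[OF uo]) simp
  have z: "z \<in> l2" unfolding z_def by (rule l2_diff[OF x P])
  have t0: "t k \<ge> 0" for k unfolding t_def by (rule posform_pos[OF B ons_l2[OF uo]])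
  have b0: "\<beta> \<ge> 0" unfolding \<beta>_def by (rule posform_pos[OF B x])
  have xe: "x = (\<lambda>n. P n + z n)" by (simp add: z_def)
  have "B x x = B P x + B z x"
    by (subst (1) xe) (rule posform_add[OF B P z x])
  moreover have "B P x = (\<Sum>k<M. c k * B (u k) x)"
  proof -
    have "B P x = (\<Sum>k<M. B (\<lambda>n. c k * u k n) x)"
      unfolding P_def proj_def by (rule posform_sum_left[OF B x]) (auto intro: l2_scale ons_l2[OF uo])
    also have "\<dots> = (\<Sum>k<M. c k * B (u k) x)"
      by (intro sum.cong refl posform_scale[OF B ons_l2[OF uo] x])
    finally show ?thesis .
  qed
  ultimately have e: "B x x = (\<Sum>k<M. c k * B (u k) x) + B z x" by simp
  have buk: "cmod (B (u k) x) \<le> sqrt (t k) * sqrt \<beta>" for k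
    unfolding t_def \<beta>_def by (rule posform_cmod_le[OF B ons_l2[OF uo] x])
  have bz: "cmod (B z x) \<le> sqrt K * l2_norm z * sqrt \<beta>"
  proof -
    have "cmod (B z x) \<le> sqrt (Re (B z z)) * sqrt \<beta>"
      unfolding \<beta>_def by (rule posform_cmod_le[OF B z x])
    also have "sqrt (Re (B z z)) \<le> sqrt (K * (l2_norm z)\<^sup>2)" by (rule real_sqrt_le_mono[OF Kb[OF z]])
    also have "\<dots> = sqrt K * l2_norm z"
      using l2_norm_nonneg[OF z] by (simp add: real_sqrt_mult)
    finally show ?thesis using b0 by (simp add: mult_right_mono)
  qed
  define A where "A = (\<Sum>k<M. cmod (c k) * sqrt (t k)) + sqrt K * l2_norm z"
  have "\<beta> \<le> cmod (B x x)" unfolding \<beta>_def by (rule complex_Re_le_cmod)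
  also have "\<dots> \<le> cmod (\<Sum>k<M. c k * B (u k) x) + cmod (B z x)" unfolding e by (rule norm_triangle_ineq)
  also have "cmod (\<Sum>k<M. c k * B (u k) x) \<le> (\<Sum>k<M. cmod (c k * B (u k) x))" by (rule norm_sum)
  also have "\<dots> \<le> (\<Sum>k<M. cmod (c k) * (sqrt (t k) * sqrt \<beta>))"
    by (intro sum_mono) (simp add: norm_mult mult_left_mono buk)
  finally have "\<beta> \<le> (\<Sum>k<M. cmod (c k) * sqrt (t k)) * sqrt \<beta> + sqrt K * l2_norm z * sqrt \<beta>"
    using bz by (simp add: sum_distrib_right mult.assoc)
  hence bA: "sqrt \<beta> * sqrt \<beta> \<le> A * sqrt \<beta>" unfolding A_def using b0 by (simp add: algebra_simps)
  have A0: "0 \<le> A" unfolding A_def using K l2_norm_nonneg[OF z] t0 by (intro add_nonneg_nonneg sum_nonneg) auto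
  have sbA: "sqrt \<beta> \<le> A"
  proof (cases "\<beta> = 0")
    case True then show ?thesis using A0 by simp
  next
    case False
    hence sp: "sqrt \<beta> > 0" using b0 by simp
    have "sqrt \<beta> * sqrt \<beta> \<le> A * sqrt \<beta>" by (rule bA)
    thus ?thesis using sp by (rule mult_right_le_imp_le)
  qed
  have split: "(\<Sum>k<M. cmod (c k) * sqrt (t k)) = (\<Sum>k<K0. cmod (c k) * sqrt (t k))
      + (\<Sum>k\<in>{K0..<M}. cmod (c k) * sqrt (t k))"
    using sum_lessThan_diff[OF KM, of "\<lambda>k. cmod (c k) * sqrt (t k)"] by simp
  have tail: "(\<Sum>k\<in>{K0..<M}. cmod (c k) * sqrt (t k)) \<le> sqrt \<delta>"
  proof -
    have "(\<Sum>k\<in>{K0..<M}. cmod (c k) * sqrt (t k))\<^sup>2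
        \<le> (\<Sum>k\<in>{K0..<M}. (cmod (c k))\<^sup>2) * (\<Sum>k\<in>{K0..<M}. (sqrt (t k))\<^sup>2)"
      by (rule Cauchy_Schwarz_ineq_sum)
    also have "(\<Sum>k\<in>{K0..<M}. (sqrt (t k))\<^sup>2) = (\<Sum>k\<in>{K0..<M}. t k)"
      using t0 by simp
    also have "(\<Sum>k\<in>{K0..<M}. (cmod (c k))\<^sup>2) \<le> 1"
      using bessel[OF uo _ x, of "{K0..<M}"] nx by (simp add: c_def)
    also have "(\<Sum>k\<in>{K0..<M}. t k) \<le> \<delta>" using tsum by (simp add: t_def)
    finally have h: "(\<Sum>k\<in>{K0..<M}. cmod (c k) * sqrt (t k))\<^sup>2 \<le> 1 * \<delta>"
      using t0 by (simp add: sum_nonneg mult_right_mono)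
    have "(\<Sum>k\<in>{K0..<M}. cmod (c k) * sqrt (t k)) = sqrt ((\<Sum>k\<in>{K0..<M}. cmod (c k) * sqrt (t k))\<^sup>2)"
      using t0 by (simp add: sum_nonneg)
    also have "\<dots> \<le> sqrt \<delta>" by (rule real_sqrt_le_mono) (use h in simp)
    finally show ?thesis .
  qed
  show ?thesis using sbA split tail unfolding A_def
    by (simp add: \<beta>_def c_def t_def z_def P_def)
qed

lemma key_est:
  assumes B: "posform B" and u: "orthonormal_basis u" and x: "x \<in> l2" and nx: "l2_norm x = 1"
    and Kb: "\<And>z. z \<in> l2 \<Longrightarrow> Re (B z z) \<le> K * (l2_norm z)\<^sup>2" and K: "K \<ge> 0"
    and tsum: "\<And>M. K0 \<le> M \<Longrightarrow> (\<Sum>k\<in>{K0..<M}. Re (B (u k) (u k))) \<le> \<delta>"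
  shows "sqrt (Re (B x x)) \<le> (\<Sum>k<K0. cmod (l2_inner x (u k)) * sqrt (Re (B (u k) (u k)))) + sqrt \<delta>"
proof -
  define C where "C = (\<Sum>k<K0. cmod (l2_inner x (u k)) * sqrt (Re (B (u k) (u k)))) + sqrt \<delta>"
  define zn where "zn = (\<lambda>M. l2_norm (\<lambda>n. x n - proj u {..<M} (\<lambda>k. l2_inner x (u k)) n))"
  have "zn \<longlonglongrightarrow> 0" unfolding zn_def by (rule parseval[OF u x])
  hence "(\<lambda>M. C + sqrt K * zn M) \<longlonglongrightarrow> C + sqrt K * 0" by (intro tendsto_add tendsto_mult tendsto_const)
  hence lim: "(\<lambda>M. C + sqrt K * zn M) \<longlonglongrightarrow> C" by simp
  have "\<exists>N. \<forall>M\<ge>N. sqrt (Re (B x x)) \<le> C + sqrt K * zn M"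
    unfolding C_def zn_def using key_est_M[OF B u x nx Kb K tsum] by blast
  thus ?thesis using LIMSEQ_le_const[OF lim] unfolding C_def by blast
qed



theorem corollary4p7:
  fixes S :: "'s::finite \<Rightarrow> op"
    and lam :: "nat \<Rightarrow> real^'s"
    and alpha0 :: real and alpha :: "'s \<Rightarrow> real"
    and V :: op and a :: real
  assumes "\<forall>j. selfadjoint (S j)"
    and "\<forall>k. lam k \<in> interior (ess_num_range S)"
    and "lam \<in> diagonals S"
    and "alpha \<noteq> (\<lambda>j. 0)"
    and "V = (\<lambda>x. (\<lambda>n. complex_of_real alpha0 * x n
                         + (\<Sum>j\<in>UNIV. complex_of_real (alpha j) * S j x n)))"
    and "a = Inf (Re ` numerical_range V)"
  shows "filterlim (\<lambda>N. \<Sum>k<N. alpha0 - a + (\<Sum>j\<in>UNIV. alpha j * lam k $ j))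
           at_top sequentially"
proof -
  note sa = assms(1) and int = assms(2) and dg = assms(3) and anz = assms(4)
    and Vdef = assms(5) and adef = assms(6)
  have bop: "bounded_op (S j)" for j using sa by (simp add: selfadjoint_def)
  have Sl2: "x \<in> l2 \<Longrightarrow> S j x \<in> l2" for j x using bop[of j] by (simp add: bounded_op_def)
  have Sadd: "x \<in> l2 \<Longrightarrow> y \<in> l2 \<Longrightarrow> S j (\<lambda>n. x n + y n) = (\<lambda>n. S j x n + S j y n)" for j x y
    using bop[of j] by (simp add: bounded_op_def vadd_def)
  have Sscale: "x \<in> l2 \<Longrightarrow> S j (\<lambda>n. c * x n) = (\<lambda>n. c * S j x n)" for j x c
    using bop[of j] by (simp add: bounded_op_def vscale_def)
  have Sherm: "x \<in> l2 \<Longrightarrow> y \<in> l2 \<Longrightarrow> l2_inner (S j x) y = l2_inner x (S j y)" for j x y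
    using sa by (simp add: selfadjoint_def)
  have "\<forall>j. \<exists>C. \<forall>x\<in>l2. l2_norm (S j x) \<le> C * l2_norm x"
    using bop by (simp add: bounded_op_def)
  then obtain C where C: "\<And>j x. x \<in> l2 \<Longrightarrow> l2_norm (S j x) \<le> C j * l2_norm x"
    by metis
  have Sbound: "cmod (l2_inner (S j x) x) \<le> \<bar>C j\<bar> * (l2_norm x)\<^sup>2" if x: "x \<in> l2" for j x
  proof -
    have "cmod (l2_inner (S j x) x) \<le> l2_norm (S j x) * l2_norm x" by (rule inner_CS[OF Sl2[OF x] x])
    also have "\<dots> \<le> (C j * l2_norm x) * l2_norm x"
      by (rule mult_right_mono[OF C[OF x] l2_norm_nonneg[OF x]])
    also have "\<dots> \<le> (\<bar>C j\<bar> * l2_norm x) * l2_norm x"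
      using l2_norm_nonneg[OF x] by (intro mult_right_mono) auto
    finally show ?thesis by (simp add: power2_eq_square mult.assoc)
  qed
  have Vx: "V x = (\<lambda>n. complex_of_real alpha0 * x n + (\<Sum>j\<in>UNIV. complex_of_real (alpha j) * S j x n))" for x
    by (simp add: Vdef)
  have Vl2: "x \<in> l2 \<Longrightarrow> V x \<in> l2" for x
    unfolding Vx by (intro l2_add l2_scale l2_sum Sl2) auto
  have Vinner: "l2_inner (V x) y = complex_of_real alpha0 * l2_inner x y
      + (\<Sum>j\<in>UNIV. complex_of_real (alpha j) * l2_inner (S j x) y)" if x: "x \<in> l2" and y: "y \<in> l2" for x y
  proof -
    have s1: "(\<lambda>n. complex_of_real alpha0 * x n) \<in> l2" by (rule l2_scale[OF x])
    have s2: "(\<lambda>n. \<Sum>j\<in>UNIV. complex_of_real (alpha j) * S j x n) \<in> l2"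
      by (intro l2_sum l2_scale Sl2 x) auto
    have "l2_inner (V x) y = l2_inner (\<lambda>n. complex_of_real alpha0 * x n) y
        + l2_inner (\<lambda>n. \<Sum>j\<in>UNIV. complex_of_real (alpha j) * S j x n) y"
      unfolding Vx by (rule inner_add_left[OF s1 s2 y])
    also have "l2_inner (\<lambda>n. complex_of_real alpha0 * x n) y = complex_of_real alpha0 * l2_inner x y"
      by (rule inner_scale_left[OF x y])
    also have "l2_inner (\<lambda>n. \<Sum>j\<in>UNIV. complex_of_real (alpha j) * S j x n) y
        = (\<Sum>j\<in>UNIV. l2_inner (\<lambda>n. complex_of_real (alpha j) * S j x n) y)"
      by (rule inner_sum_left) (auto intro: l2_scale Sl2 x y)
    also have "\<dots> = (\<Sum>j\<in>UNIV. complex_of_real (alpha j) * l2_inner (S j x) y)"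
      by (intro sum.cong refl inner_scale_left Sl2 x y)
    finally show ?thesis .
  qed
  have Vadd: "V (\<lambda>n. x n + y n) = (\<lambda>n. V x n + V y n)" if "x \<in> l2" "y \<in> l2" for x y
    unfolding Vx using that by (simp add: Sadd sum.distrib algebra_simps)
  have Vscale: "V (\<lambda>n. c * x n) = (\<lambda>n. c * V x n)" if "x \<in> l2" for x c
    unfolding Vx using that by (simp add: Sscale sum_distrib_left algebra_simps)
  have ReV: "Re (l2_inner (V x) x) = alpha0 * (l2_norm x)\<^sup>2 + (\<Sum>j\<in>UNIV. alpha j * Re (l2_inner (S j x) x))"
    if x: "x \<in> l2" for x
    using Vinner[OF x x] inner_self[OF x] by simp
  define K1 where "K1 = \<bar>alpha0\<bar> + (\<Sum>j\<in>UNIV. \<bar>alpha j\<bar> * \<bar>C j\<bar>)"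
  have K1: "\<bar>Re (l2_inner (V x) x)\<bar> \<le> K1 * (l2_norm x)\<^sup>2" if x: "x \<in> l2" for x
  proof -
    have "\<bar>Re (l2_inner (V x) x)\<bar> \<le> \<bar>alpha0 * (l2_norm x)\<^sup>2\<bar> + \<bar>\<Sum>j\<in>UNIV. alpha j * Re (l2_inner (S j x) x)\<bar>"
      unfolding ReV[OF x] by (rule abs_triangle_ineq)
    also have "\<bar>\<Sum>j\<in>UNIV. alpha j * Re (l2_inner (S j x) x)\<bar> \<le> (\<Sum>j\<in>UNIV. \<bar>alpha j * Re (l2_inner (S j x) x)\<bar>)"
      by (rule sum_abs)
    also have "\<dots> \<le> (\<Sum>j\<in>UNIV. \<bar>alpha j\<bar> * (\<bar>C j\<bar> * (l2_norm x)\<^sup>2))"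
    proof (intro sum_mono)
      fix j
      have "\<bar>Re (l2_inner (S j x) x)\<bar> \<le> \<bar>C j\<bar> * (l2_norm x)\<^sup>2"
        using abs_Re_le_cmod[of "l2_inner (S j x) x"] Sbound[OF x, of j] by linarith
      thus "\<bar>alpha j * Re (l2_inner (S j x) x)\<bar> \<le> \<bar>alpha j\<bar> * (\<bar>C j\<bar> * (l2_norm x)\<^sup>2)"
        by (simp add: abs_mult mult_left_mono)
    qed
    finally show ?thesis unfolding K1_def
      by (simp add: abs_mult distrib_right sum_distrib_right mult.assoc)
  qed
  have K1nn: "0 \<le> K1" unfolding K1_def by (intro add_nonneg_nonneg sum_nonneg) auto
  have unit_norm: "l2_norm x = 1" if "x \<in> l2" "Re (l2_inner x x) = 1" for x
  proof -
    have "(l2_norm x)\<^sup>2 = 1" using norm_sq_re[OF that(1)] that(2) by simp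
    hence "l2_norm x = 1 \<or> l2_norm x = - 1" by (simp add: power2_eq_1_iff)
    moreover have "0 \<le> l2_norm x" by (rule l2_norm_nonneg[OF that(1)])
    ultimately show ?thesis by linarith
  qed
  have bdd: "bdd_below (Re ` numerical_range V)"
  proof (rule bdd_belowI[where m="- K1"])
    fix r assume "r \<in> Re ` numerical_range V"
    then obtain x where x: "x \<in> l2" "l2_norm x = 1" and r: "r = Re (l2_inner (V x) x)"
      unfolding numerical_range_def by auto
    show "- K1 \<le> r" using K1[OF x(1)] x(2) r by (simp add: abs_le_iff)
  qed
  have alow: "a \<le> Re (l2_inner (V x) x)" if "x \<in> l2" "l2_norm x = 1" for x
  proof -
    have "Re (l2_inner (V x) x) \<in> Re ` numerical_range V"
      unfolding numerical_range_def using that by blast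
    thus ?thesis unfolding adef by (rule cInf_lower[OF _ bdd])
  qed
  define B where "B = (\<lambda>x y. l2_inner (V x) y - complex_of_real a * l2_inner x y)"
  have ReB: "Re (B x x) = Re (l2_inner (V x) x) - a * (l2_norm x)\<^sup>2" if "x \<in> l2" for x
    unfolding B_def using inner_self[OF that] by simp
  have Bherm: "B y x = cnj (B x y)" if x: "x \<in> l2" and y: "y \<in> l2" for x y
  proof -
    have h1: "l2_inner (S j y) x = cnj (l2_inner (S j x) y)" for j
    proof -
      have "l2_inner (S j y) x = l2_inner y (S j x)" by (rule Sherm[OF y x])
      also have "\<dots> = cnj (l2_inner (S j x) y)" by (rule inner_commute[OF Sl2[OF x] y])
      finally show ?thesis .
    qed
    have h2: "l2_inner y x = cnj (l2_inner x y)" by (rule inner_commute[OF x y])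
    have "B y x = complex_of_real alpha0 * cnj (l2_inner x y)
      + (\<Sum>j\<in>UNIV. complex_of_real (alpha j) * cnj (l2_inner (S j x) y))
      - complex_of_real a * cnj (l2_inner x y)"
      unfolding B_def Vinner[OF y x] h1 h2 ..
    also have "\<dots> = cnj (B x y)"
      unfolding B_def Vinner[OF x y]
      by (simp only: complex_cnj_diff complex_cnj_add complex_cnj_mult complex_cnj_complex_of_real cnj_sum)
    finally show ?thesis .
  qed
  have Bpos: "posform B"
    unfolding posform_def
  proof (intro conjI ballI allI)
    fix x y z assume xyz: "x \<in> l2" "y \<in> l2" "z \<in> l2"
    show "B (\<lambda>n. x n + y n) z = B x z + B y z"
      unfolding B_def Vadd[OF xyz(1,2)] inner_add_left[OF Vl2[OF xyz(1)] Vl2[OF xyz(2)] xyz(3)]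
        inner_add_left[OF xyz] by (simp add: algebra_simps)
  next
    fix x z c assume xz: "x \<in> l2" "z \<in> l2"
    show "B (\<lambda>n. c * x n) z = c * B x z"
      unfolding B_def Vscale[OF xz(1)] inner_scale_left[OF Vl2[OF xz(1)] xz(2)]
        inner_scale_left[OF xz] by (simp add: algebra_simps)
  next
    fix x y assume "x \<in> l2" "y \<in> l2"
    thus "B y x = cnj (B x y)" by (rule Bherm)
  next
    fix x assume x: "x \<in> l2"
    show "0 \<le> Re (B x x)"
    proof (cases "l2_norm x = 0")
      case True
      have "cmod (l2_inner (V x) x) \<le> l2_norm (V x) * l2_norm x" by (rule inner_CS[OF Vl2[OF x] x])
      also have "\<dots> = 0" by (simp only: True mult_zero_right)
      finally have "cmod (l2_inner (V x) x) \<le> 0" .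
      hence z: "l2_inner (V x) x = 0" by (simp only: norm_le_zero_iff)
      have "Re (B x x) = 0" unfolding ReB[OF x] z True by simp
      thus ?thesis by simp
    next
      case False
      define r where "r = l2_norm x"
      have rp: "r > 0" using False l2_norm_nonneg[OF x] unfolding r_def by linarith
      define y where "y = (\<lambda>n. complex_of_real (1/r) * x n)"
      have y: "y \<in> l2" unfolding y_def by (rule l2_scale[OF x])
      have yy: "l2_inner y y = complex_of_real (1/r) * complex_of_real (1/r) * l2_inner x x"
        unfolding y_def inner_scale_left[OF x l2_scale[OF x]] inner_scale_right[OF x x] by simp
      have "Re (l2_inner y y) = 1"
        unfolding yy using inner_self[OF x] rp by (simp add: r_def power2_eq_square)
      hence ny: "l2_norm y = 1" by (rule unit_norm[OF y])
      have Vyy: "l2_inner (V y) y = complex_of_real (1/r) * complex_of_real (1/r) * l2_inner (V x) x"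
        unfolding y_def Vscale[OF x] inner_scale_left[OF Vl2[OF x] l2_scale[OF x]]
          inner_scale_right[OF x Vl2[OF x]] by simp
      have "a \<le> Re (l2_inner (V y) y)" by (rule alow[OF y ny])
      also have "\<dots> = Re (l2_inner (V x) x) / r\<^sup>2" unfolding Vyy by (simp add: power2_eq_square)
      finally have "a * r\<^sup>2 \<le> Re (l2_inner (V x) x)" using rp by (simp add: field_simps)
      thus ?thesis unfolding ReB[OF x] r_def by simp
    qed
  qed
  define K where "K = K1 + \<bar>a\<bar>"
  have Kb: "Re (B z z) \<le> K * (l2_norm z)\<^sup>2" if z: "z \<in> l2" for z
  proof -
    have "Re (B z z) \<le> K1 * (l2_norm z)\<^sup>2 + \<bar>a\<bar> * (l2_norm z)\<^sup>2"
    proof -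
      have "Re (l2_inner (V z) z) \<le> K1 * (l2_norm z)\<^sup>2" using K1[OF z] by (simp add: abs_le_iff)
      moreover have "- a * (l2_norm z)\<^sup>2 \<le> \<bar>a\<bar> * (l2_norm z)\<^sup>2"
        by (rule mult_right_mono) auto
      ultimately show ?thesis unfolding ReB[OF z] by simp
    qed
    thus ?thesis unfolding K_def by (simp add: distrib_right)
  qed
  have Knn: "0 \<le> K" unfolding K_def using K1nn by simp
  obtain u where u: "orthonormal_basis u"
    and lamu: "\<And>k. lam k = (\<chi> j. Re (l2_inner (S j (u k)) (u k)))"
    using dg unfolding diagonals_def by blast
  have uo: "orthonormal_seq u" using u by (simp add: orthonormal_basis_def)
  have ul2: "u k \<in> l2" for k by (rule ons_l2[OF uo])
  define f where "f = (\<lambda>k. alpha0 - a + (\<Sum>j\<in>UNIV. alpha j * lam k $ j))"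
  have fB: "f k = Re (B (u k) (u k))" for k
  proof -
    have "Re (l2_inner (u k) (u k)) = 1" using ons_inner[OF uo, of k k] by simp
    hence n1: "(l2_norm (u k))\<^sup>2 = 1" using norm_sq_re[OF ul2] by simp
    show ?thesis unfolding ReB[OF ul2] ReV[OF ul2] n1 f_def lamu by simp
  qed
  have f0: "f k \<ge> 0" for k unfolding fB by (rule posform_pos[OF Bpos ul2])
  show ?thesis
  proof (rule ccontr)
    assume nf: "\<not> filterlim (\<lambda>N. \<Sum>k<N. alpha0 - a + (\<Sum>j\<in>UNIV. alpha j * lam k $ j)) at_top sequentially"
    have "\<exists>Z. \<forall>N. (\<Sum>k<N. f k) \<le> Z"
    proof (rule ccontr)
      assume "\<not> (\<exists>Z. \<forall>N. (\<Sum>k<N. f k) \<le> Z)"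
      hence big: "\<forall>Z. \<exists>N. Z < (\<Sum>k<N. f k)" by (simp add: not_le)
      have "filterlim (\<lambda>N. \<Sum>k<N. f k) at_top sequentially"
        unfolding filterlim_at_top eventually_sequentially
      proof
        fix Z
        obtain N0 where N0: "Z < (\<Sum>k<N0. f k)" using big by blast
        have "\<forall>N\<ge>N0. Z \<le> (\<Sum>k<N. f k)"
        proof (intro allI impI)
          fix N assume "N0 \<le> N"
          hence "(\<Sum>k<N0. f k) \<le> (\<Sum>k<N. f k)" by (intro sum_mono2) (auto intro: f0)
          thus "Z \<le> (\<Sum>k<N. f k)" using N0 by linarith
        qed
        thus "\<exists>N0. \<forall>N\<ge>N0. Z \<le> (\<Sum>k<N. f k)" by blast
      qed
      thus False using nf unfolding f_def by simp
    qed
    then obtain Z where Z: "\<And>N. (\<Sum>k<N. f k) \<le> Z" by blast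
    have fs: "summable f"
    proof (rule bounded_imp_summable[where B=Z])
      fix n show "0 \<le> f n" by (rule f0)
      show "(\<Sum>k\<le>n. f k) \<le> Z" using Z[of "Suc n"] by (simp only: lessThan_Suc_atMost)
    qed
    obtain e where e: "e > 0" and ball: "ball (lam 0) e \<subseteq> ess_num_range S"
      using int mem_interior by blast
    define v :: "real^'s" where "v = (\<chi> j. alpha j)"
    obtain j0 where j0: "alpha j0 \<noteq> 0" using anz by (auto simp: fun_eq_iff)
    have v0: "v \<noteq> 0" using j0 by (auto simp: v_def vec_eq_iff)
    hence nv: "norm v > 0" by simp
    define \<epsilon> where "\<epsilon> = e / (2 * norm v)"
    have ep: "\<epsilon> > 0" unfolding \<epsilon>_def using e nv by simp
    define \<mu> where "\<mu> = lam 0 + \<epsilon> *\<^sub>R v"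
    have "dist (lam 0) \<mu> = \<epsilon> * norm v" unfolding \<mu>_def dist_norm using ep by simp
    also have "\<dots> = e / 2" unfolding \<epsilon>_def using nv by simp
    finally have "\<mu> \<in> ball (lam 0) e" using e by simp
    hence "\<mu> \<in> ess_num_range S" using ball by blast
    then obtain xs where xs: "orthonormal_seq xs"
      and xlim: "\<And>j. (\<lambda>k. Re (l2_inner (S j (xs k)) (xs k))) \<longlonglongrightarrow> \<mu> $ j"
      unfolding ess_num_range_def by blast
    have xl2: "xs n \<in> l2" for n by (rule ons_l2[OF xs])
    have xn1: "l2_norm (xs n) = 1" for n
      using unit_norm[OF xl2] ons_inner[OF xs, of n n] by simp
    define cc where "cc = alpha0 + (\<Sum>j\<in>UNIV. alpha j * \<mu> $ j) - a"
    have ccf: "cc = f 0 + \<epsilon> * (\<Sum>j\<in>UNIV. (alpha j)\<^sup>2)"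
      unfolding cc_def f_def \<mu>_def v_def
      by (simp add: algebra_simps sum.distrib sum_distrib_left power2_eq_square)
    have sq: "(\<Sum>j\<in>UNIV. (alpha j)\<^sup>2) > 0"
      by (rule sum_pos2[of UNIV j0]) (use j0 in auto)
    have ccp: "cc > 0" unfolding ccf using f0[of 0] ep sq by (simp add: add_nonneg_pos)
    have gx: "Re (B (xs n) (xs n)) = alpha0 + (\<Sum>j\<in>UNIV. alpha j * Re (l2_inner (S j (xs n)) (xs n))) - a" for n
      unfolding ReB[OF xl2] ReV[OF xl2] xn1 by simp
    have glim: "(\<lambda>n. Re (B (xs n) (xs n))) \<longlonglongrightarrow> cc"
      unfolding gx cc_def by (intro tendsto_diff tendsto_add tendsto_sum tendsto_mult tendsto_const xlim)
    define \<delta> where "\<delta> = cc / 4"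
    have dp: "\<delta> > 0" unfolding \<delta>_def using ccp by simp
    have "(\<lambda>N. \<Sum>k<N. f k) \<longlonglongrightarrow> suminf f" by (rule summable_LIMSEQ[OF fs])
    then obtain K0 where K0: "\<And>N. N \<ge> K0 \<Longrightarrow> dist (\<Sum>k<N. f k) (suminf f) < \<delta>"
      using dp by (metis LIMSEQ_iff_nz dist_norm)
    have tsum: "(\<Sum>k\<in>{K0..<M}. Re (B (u k) (u k))) \<le> \<delta>" if "K0 \<le> M" for M
    proof -
      have "(\<Sum>k<M. f k) \<le> suminf f" by (rule sum_le_suminf[OF fs]) (auto intro: f0)
      moreover have "suminf f - (\<Sum>k<K0. f k) < \<delta>" using K0[of K0] by (simp add: dist_real_def)
      moreover have "(\<Sum>k<M. f k) - (\<Sum>k<K0. f k) = (\<Sum>k\<in>{K0..<M}. f k)"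
        by (rule sum_lessThan_diff[OF that])
      ultimately show ?thesis unfolding fB by linarith
    qed
    have est: "sqrt (Re (B (xs n) (xs n))) \<le> (\<Sum>k<K0. cmod (l2_inner (xs n) (u k)) * sqrt (f k)) + sqrt \<delta>" for n
      unfolding fB by (rule key_est[OF Bpos u xl2 xn1 Kb Knn tsum])
    have coefz: "(\<lambda>n. cmod (l2_inner (xs n) (u k))) \<longlonglongrightarrow> 0" for k
    proof -
      have "summable (\<lambda>n. (cmod (l2_inner (u k) (xs n)))\<^sup>2)" by (rule coeff_bessel_summable[OF xs ul2])
      hence "(\<lambda>n. (cmod (l2_inner (u k) (xs n)))\<^sup>2) \<longlonglongrightarrow> 0" by (rule summable_LIMSEQ_zero)
      hence "(\<lambda>n. sqrt ((cmod (l2_inner (u k) (xs n)))\<^sup>2)) \<longlonglongrightarrow> sqrt 0" by (rule tendsto_real_sqrt)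
      moreover have "sqrt ((cmod (l2_inner (u k) (xs n)))\<^sup>2) = cmod (l2_inner (xs n) (u k))" for n
        using inner_commute[OF ul2[of k] xl2[of n]] by simp
      ultimately show ?thesis by simp
    qed
    have rlim: "(\<lambda>n. (\<Sum>k<K0. cmod (l2_inner (xs n) (u k)) * sqrt (f k)) + sqrt \<delta>) \<longlonglongrightarrow>
        (\<Sum>k<K0. 0 * sqrt (f k)) + sqrt \<delta>"
      by (intro tendsto_add tendsto_sum tendsto_mult tendsto_const coefz)
    have llim: "(\<lambda>n. sqrt (Re (B (xs n) (xs n)))) \<longlonglongrightarrow> sqrt cc" by (rule tendsto_real_sqrt[OF glim])
    have "sqrt cc \<le> (\<Sum>k<K0. 0 * sqrt (f k)) + sqrt \<delta>"
      by (rule LIMSEQ_le[OF llim rlim]) (use est in blast)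
    hence "sqrt cc \<le> sqrt \<delta>" by simp
    hence "cc \<le> \<delta>" by simp
    thus False using ccp unfolding \<delta>_def by simp
  qed
qed


end
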